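(* Let $f:\mathbb{R}\to\mathbb{R}$ be continuous and monotonic. Then $L_f^\infty$ is a $G_\delta$ set of Lebesgue measure zero. Conversely, if $E\subset\mathbb{R}$ is a $G_\delta$ set of Lebesgue measure zero, then there exists a continuous monotonic function $f:\mathbb{R}\to\mathbb{R}$ such that $L_f^\infty=E$ and $l_f^\infty=\emptyset$; moreover, $f$ can be chosen so that in addition $\operatorname{lip} f(x)=0$ for all $x\in E$.
   Context: For a continuous $f:\mathbb{R}\to\mathbb{R}$, $x\in\mathbb{R}$ and $r>0$, let $M_f(x,r)=\sup\{|f(x)-f(y)|/r : |x-y|\le r\}$. Define $\operatorname{Lip} f(x)=\limsup_{r\to0^+}M_f(x,r)$ and $\operatorname{lip} f(x)=\liminf_{r\to0^+}M_f(x,r)$ (values in $[0,\infty]$). Let $L_f^\infty=\{x\in\mathbb{R}:\operatorname{Lip} f(x)=\infty\}$ and $l_f^\infty=\{x\in\mathbb{R}:\operatorname{lip} f(x)=\infty\}$. *)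

theory Defs
  imports "HOL-Analysis.Analysis"
begin

definition Mf :: "(real \<Rightarrow> real) \<Rightarrow> real \<Rightarrow> real \<Rightarrow> ereal" where
  "Mf f x r = (SUP y\<in>{y. \<bar>x - y\<bar> \<le> r}. ereal (\<bar>f x - f y\<bar> / r))"

definition Lip_upper :: "(real \<Rightarrow> real) \<Rightarrow> real \<Rightarrow> ereal" where
  "Lip_upper f x = Limsup (at_right 0) (\<lambda>r. Mf f x r)"

definition lip_lower :: "(real \<Rightarrow> real) \<Rightarrow> real \<Rightarrow> ereal" where
  "lip_lower f x = Liminf (at_right 0) (\<lambda>r. Mf f x r)"

definition L_inf :: "(real \<Rightarrow> real) \<Rightarrow> real set" where
  "L_inf f = {x. Lip_upper f x = \<infinity>}"

definition l_inf :: "(real \<Rightarrow> real) \<Rightarrow> real set" where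
  "l_inf f = {x. lip_lower f x = \<infinity>}"

end

theory Submission
  imports Defs
begin


definition Dm :: "(real \<Rightarrow> real) \<Rightarrow> real \<Rightarrow> real \<Rightarrow> real" where
  "Dm f x r = max (f (x + r) - f x) (f x - f (x - r)) / r"

lemma Mf_mono:
  assumes "mono f" "r > 0"
  shows "Mf f x r = ereal (Dm f x r)"
  unfolding Mf_def Dm_def
proof (rule antisym)
  show "(SUP y\<in>{y. \<bar>x - y\<bar> \<le> r}. ereal (\<bar>f x - f y\<bar> / r)) \<le> ereal (max (f (x + r) - f x) (f x - f (x - r)) / r)"
  proof (rule SUP_least)
    fix y assume "y \<in> {y. \<bar>x - y\<bar> \<le> r}"
    then have y: "x - r \<le> y" "y \<le> x + r" by auto
    have "\<bar>f x - f y\<bar> \<le> max (f (x + r) - f x) (f x - f (x - r))"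
    proof (cases "x \<le> y")
      case True
      then have "f x \<le> f y" "f y \<le> f (x + r)" using assms(1) y by (auto simp: mono_def)
      then show ?thesis by auto
    next
      case False
      then have "f y \<le> f x" "f (x - r) \<le> f y" using assms(1) y by (auto simp: mono_def)
      then show ?thesis by auto
    qed
    then show "ereal (\<bar>f x - f y\<bar> / r) \<le> ereal (max (f (x + r) - f x) (f x - f (x - r)) / r)"
      using assms(2) by (simp add: divide_right_mono)
  qed
next
  have a: "ereal (\<bar>f x - f (x+r)\<bar> / r) \<le> (SUP y\<in>{y. \<bar>x - y\<bar> \<le> r}. ereal (\<bar>f x - f y\<bar> / r))"
    by (rule SUP_upper) (use assms in auto)
  have b: "ereal (\<bar>f x - f (x-r)\<bar> / r) \<le> (SUP y\<in>{y. \<bar>x - y\<bar> \<le> r}. ereal (\<bar>f x - f y\<bar> / r))"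
    by (rule SUP_upper) (use assms in auto)
  have c1: "(f (x + r) - f x) / r \<le> \<bar>f x - f (x+r)\<bar> / r"
    using assms(2) by (intro divide_right_mono) auto
  have c2: "(f x - f (x - r)) / r \<le> \<bar>f x - f (x-r)\<bar> / r"
    using assms(2) by (intro divide_right_mono) auto
  have c: "max (f (x + r) - f x) (f x - f (x - r)) / r \<le> max (\<bar>f x - f (x+r)\<bar> / r) (\<bar>f x - f (x-r)\<bar> / r)"
    using c1 c2 by (cases "f (x + r) - f x \<le> f x - f (x - r)") (auto simp: max_def)
  show "ereal (max (f (x + r) - f x) (f x - f (x - r)) / r) \<le> (SUP y\<in>{y. \<bar>x - y\<bar> \<le> r}. ereal (\<bar>f x - f y\<bar> / r))"
  proof -
    have "ereal (max (f (x + r) - f x) (f x - f (x - r)) / r) \<le> ereal (max (\<bar>f x - f (x+r)\<bar> / r) (\<bar>f x - f (x-r)\<bar> / r))"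
      using c by (simp only: ereal_less_eq(3))
    also have "\<dots> \<le> (SUP y\<in>{y. \<bar>x - y\<bar> \<le> r}. ereal (\<bar>f x - f y\<bar> / r))"
      using a b by (cases "\<bar>f x - f (x+r)\<bar> / r \<le> \<bar>f x - f (x-r)\<bar> / r") (simp_all add: max_def)
    finally show ?thesis .
  qed
qed

lemma Mf_uminus: "Mf (\<lambda>x. - f x) x r = Mf f x r"
  unfolding Mf_def by (simp add: abs_minus_commute)

lemma Lip_uminus: "Lip_upper (\<lambda>x. - f x) = Lip_upper f" "lip_lower (\<lambda>x. - f x) = lip_lower f"
  unfolding Lip_upper_def lip_lower_def Mf_uminus by auto

lemma Linf_uminus: "L_inf (\<lambda>x. - f x) = L_inf f"
  unfolding L_inf_def Lip_uminus by auto

lemma Lip_upper_Dm: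
  assumes "mono f"
  shows "Lip_upper f x = Limsup (at_right 0) (\<lambda>r. ereal (Dm f x r))"
  unfolding Lip_upper_def
  by (rule Limsup_eq) (auto simp: eventually_at_right_field Mf_mono[OF assms] intro!: exI[of _ 1])

lemma lip_lower_Dm:
  assumes "mono f"
  shows "lip_lower f x = Liminf (at_right 0) (\<lambda>r. ereal (Dm f x r))"
  unfolding lip_lower_def
  by (rule Liminf_eq) (auto simp: eventually_at_right_field Mf_mono[OF assms] intro!: exI[of _ 1])

lemma Limsup_inf_iff:
  fixes g :: "real \<Rightarrow> real"
  shows "Limsup (at_right 0) (\<lambda>r. ereal (g r)) = \<infinity> \<longleftrightarrow> (\<forall>K \<delta>. \<delta> > 0 \<longrightarrow> (\<exists>r. 0 < r \<and> r < \<delta> \<and> g r > K))"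
proof
  assume L: "Limsup (at_right 0) (\<lambda>r. ereal (g r)) = \<infinity>"
  show "\<forall>K \<delta>. \<delta> > 0 \<longrightarrow> (\<exists>r. 0 < r \<and> r < \<delta> \<and> g r > K)"
  proof (intro allI impI, rule ccontr)
    fix K \<delta> :: real assume d: "\<delta> > 0" and n: "\<not> (\<exists>r. 0 < r \<and> r < \<delta> \<and> g r > K)"
    have "eventually (\<lambda>r. ereal (g r) \<le> ereal K) (at_right 0)"
      unfolding eventually_at_right_field
    proof (intro exI[of _ \<delta>] conjI allI impI)
      fix r :: real assume "r > 0" "r < \<delta>"
      moreover have "\<not> (0 < r \<and> r < \<delta> \<and> g r > K)" using n by (rule contrapos_nn) (rule exI)
      ultimately show "ereal (g r) \<le> ereal K" by simp
    qed (use d in auto)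
    then have "Limsup (at_right 0) (\<lambda>r. ereal (g r)) \<le> ereal K" by (rule Limsup_bounded)
    then show False using L by simp
  qed
next
  assume R: "\<forall>K \<delta>. \<delta> > 0 \<longrightarrow> (\<exists>r. 0 < r \<and> r < \<delta> \<and> g r > K)"
  have "ereal K < Limsup (at_right 0) (\<lambda>r. ereal (g r))" for K
  proof (rule ccontr)
    assume "\<not> ereal K < Limsup (at_right 0) (\<lambda>r. ereal (g r))"
    then have "Limsup (at_right 0) (\<lambda>r. ereal (g r)) \<le> ereal K" by simp
    then have "eventually (\<lambda>r. ereal (K+1) > ereal (g r)) (at_right 0)"
      using Limsup_le_iff[THEN iffD1, OF \<open>Limsup (at_right 0) (\<lambda>r. ereal (g r)) \<le> ereal K\<close>, rule_format, of "ereal (K+1)"] by simp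
    then obtain b where b: "b > 0" "\<And>r. r > 0 \<Longrightarrow> r < b \<Longrightarrow> g r < K + 1"
      unfolding eventually_at_right_field by auto
    then show False using R by (meson less_asym)
  qed
  then show "Limsup (at_right 0) (\<lambda>r. ereal (g r)) = \<infinity>"
  proof (cases "Limsup (at_right 0) (\<lambda>r. ereal (g r))")
    case (real v) then show ?thesis using \<open>\<And>K. ereal K < _\<close>[of v] by simp
  next
    case MInf then show ?thesis using \<open>\<And>K. ereal K < _\<close>[of 0] by simp
  qed simp
qed



lemma cont_shift: "continuous_on UNIV (f::real\<Rightarrow>real) \<Longrightarrow> continuous_on UNIV (\<lambda>x. f (x + r))"
  apply (rule continuous_on_compose2[of UNIV f]) by (auto intro: continuous_intros)

lemma cont_Dm: "continuous_on UNIV f \<Longrightarrow> r > 0 \<Longrightarrow> continuous_on UNIV (\<lambda>x. Dm f x r)"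
  unfolding Dm_def using cont_shift[of f r] cont_shift[of f "-r"] by (intro continuous_intros) auto

lemma Linf_char:
  assumes "mono f"
  shows "L_inf f = (\<Inter>n. {x. \<exists>r. 0 < r \<and> r < 1 / Suc n \<and> Dm f x r > n})"
proof -
  have "x \<in> L_inf f \<longleftrightarrow> (\<forall>n. \<exists>r. 0 < r \<and> r < 1 / Suc n \<and> Dm f x r > n)" for x
  proof -
    have "x \<in> L_inf f \<longleftrightarrow> (\<forall>K \<delta>. \<delta> > 0 \<longrightarrow> (\<exists>r. 0 < r \<and> r < \<delta> \<and> Dm f x r > K))"
      unfolding L_inf_def Lip_upper_Dm[OF assms] Limsup_inf_iff by simp
    also have "\<dots> \<longleftrightarrow> (\<forall>n. \<exists>r. 0 < r \<and> r < 1 / Suc n \<and> Dm f x r > n)"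
    proof
      assume "\<forall>K \<delta>. \<delta> > 0 \<longrightarrow> (\<exists>r. 0 < r \<and> r < \<delta> \<and> Dm f x r > K)"
      then show "\<forall>n. \<exists>r. 0 < r \<and> r < 1 / Suc n \<and> Dm f x r > n" by simp
    next
      assume H: "\<forall>n. \<exists>r. 0 < r \<and> r < 1 / Suc n \<and> Dm f x r > n"
      show "\<forall>K \<delta>. \<delta> > 0 \<longrightarrow> (\<exists>r. 0 < r \<and> r < \<delta> \<and> Dm f x r > K)"
      proof (intro allI impI)
        fix K \<delta> :: real assume d: "\<delta> > 0"
        define n where "n = nat \<lceil>max K (1/\<delta>)\<rceil>"
        have n1: "K \<le> n" unfolding n_def by linarith
        have "1/\<delta> \<le> n" unfolding n_def by linarith
        then have "1/\<delta> < Suc n" by simp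
        then have n2: "1 / Suc n < \<delta>" using d
          by (metis divide_less_eq mult.commute of_nat_0_less_iff zero_less_Suc)
        obtain r where "0 < r" "r < 1 / Suc n" "Dm f x r > n" using H by blast
        then show "\<exists>r. 0 < r \<and> r < \<delta> \<and> Dm f x r > K" using n1 n2
          by (intro exI[of _ r]) auto
      qed
    qed
    finally show ?thesis .
  qed
  then show ?thesis by auto
qed

lemma forward_gdelta:
  assumes "mono f" "continuous_on UNIV f"
  shows "gdelta (L_inf f)"
proof -
  have "open {x. \<exists>r. 0 < r \<and> r < 1 / Suc n \<and> Dm f x r > n}" for n
  proof -
    have "{x. \<exists>r. 0 < r \<and> r < 1 / Suc n \<and> Dm f x r > n} = (\<Union>r\<in>{0<..<1/Suc n}. {x. real n < Dm f x r})"
      by auto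
    moreover have "open {x. real n < Dm f x r}" if "r > 0" for r
      by (rule open_Collect_less) (use cont_Dm[OF assms(2) that] in auto)
    ultimately show ?thesis by auto
  qed
  then show ?thesis
    unfolding Linf_char[OF assms(1)] by (rule gdelta.intros)
qed



lemma null_of_outer:
  assumes "\<And>e. e > 0 \<Longrightarrow> \<exists>T. S \<subseteq> T \<and> T \<in> sets lebesgue \<and> emeasure lebesgue T \<le> ennreal e"
  shows "negligible S"
  unfolding negligible_outer_le
proof (intro allI impI)
  fix e :: real assume "e > 0"
  then obtain T where T: "S \<subseteq> T" "T \<in> sets lebesgue" "emeasure lebesgue T \<le> ennreal e" using assms by blast
  have "emeasure lebesgue T < \<infinity>" using T(3) ennreal_less_top[of e] by (simp add: order_le_less_trans)
  then have "T \<in> lmeasurable" using T by (intro fmeasurableI) auto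
  moreover have "measure lebesgue T \<le> e"
    using T \<open>e > 0\<close> by (simp add: measure_def enn2real_leI)
  ultimately show "\<exists>T. S \<subseteq> T \<and> T \<in> lmeasurable \<and> measure lebesgue T \<le> e" using T by blast
qed

lemma forward_null_ball:
  assumes mono: "mono f" and cont: "continuous_on UNIV f" and R0: "R \<ge> 0"
  shows "negligible (L_inf f \<inter> ball 0 R)"
proof (rule null_of_outer)
  fix e :: real assume e: "e > 0"
  define S where "S = L_inf f \<inter> ball 0 R"
  define B where "B = f (R+1) - f (-R-1)"
  have B0: "B \<ge> 0" using mono R0 unfolding B_def mono_def by auto
  define M where "M = 2 * (B + 1) / e"
  have M0: "M > 0" using B0 e unfolding M_def by auto
  define K where "K = {(x,r). x \<in> S \<and> 0 < r \<and> r < 1 \<and> f (x + r) - f (x - r) > M * r}"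
  have Kcov: "\<exists>i. i \<in> K \<and> x \<in> ball (fst i) (snd i) \<and> snd i < d" if "x \<in> S" "d > 0" for x d
  proof -
    have "Lip_upper f x = \<infinity>" using that unfolding S_def L_inf_def by auto
    then have "\<forall>K \<delta>. \<delta> > 0 \<longrightarrow> (\<exists>r. 0 < r \<and> r < \<delta> \<and> Dm f x r > K)"
      unfolding Lip_upper_Dm[OF mono] Limsup_inf_iff .
    then have H: "\<And>K \<delta>. \<delta> > 0 \<Longrightarrow> \<exists>r. 0 < r \<and> r < \<delta> \<and> Dm f x r > K" by blast
    have "\<exists>r. 0 < r \<and> r < min d 1 \<and> Dm f x r > M" using \<open>d > 0\<close> H[of "min d 1" M] by simp
    then obtain r where r: "0 < r" "r < min d 1" "Dm f x r > M" by blast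
    have "f x \<le> f (x + r)" "f (x - r) \<le> f x" using mono r(1) unfolding mono_def by auto
    then have "max (f (x + r) - f x) (f x - f (x - r)) \<le> f (x + r) - f (x - r)" by auto
    moreover have "M * r < max (f (x + r) - f x) (f x - f (x - r))"
      using r unfolding Dm_def by (simp add: pos_less_divide_eq)
    ultimately have "(x, r) \<in> K" using that r unfolding K_def by auto
    then show ?thesis using r by (intro exI[of _ "(x,r)"]) auto
  qed
  obtain C where C: "countable C" "C \<subseteq> K"
     and pw: "pairwise (\<lambda>i j. disjnt (ball (fst i) (snd i)) (ball (fst j) (snd j))) C"
     and neg: "negligible(S - (\<Union>i \<in> C. ball (fst i) (snd i)))"
    using Vitali_covering_theorem_balls[of S K fst snd, OF Kcov] by blast
  define I where "I i = {fst i - snd i <.. fst i + snd i}" for i :: "real \<times> real"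
  have disj: "disjoint_family_on I C"
    unfolding disjoint_family_on_def
  proof (intro ballI impI)
    fix i j assume ij: "i \<in> C" "j \<in> C" "i \<noteq> j"
    then have dd: "disjnt (ball (fst i) (snd i)) (ball (fst j) (snd j))" using pw unfolding pairwise_def by blast
    show "I i \<inter> I j = {}"
    proof (rule ccontr)
      assume "I i \<inter> I j \<noteq> {}"
      then obtain x where x: "x \<in> I i" "x \<in> I j" by blast
      define z where "z = (max (fst i - snd i) (fst j - snd j) + x) / 2"
      have "z \<in> ball (fst i) (snd i)" "z \<in> ball (fst j) (snd j)"
        using x unfolding z_def I_def ball_eq_greaterThanLessThan by auto
      then show False using dd unfolding disjnt_def by blast
    qed
  qed
  define T where "T = (S - (\<Union>i \<in> C. ball (fst i) (snd i))) \<union> (\<Union>i\<in>C. I i)"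
  have "S \<subseteq> T" unfolding T_def I_def by (auto simp: ball_eq_greaterThanLessThan)
  have negm: "S - (\<Union>i \<in> C. ball (fst i) (snd i)) \<in> null_sets lebesgue"
    using neg negligible_iff_null_sets by blast
  have Ims: "(\<Union>i\<in>C. I i) \<in> sets borel" using C(1) unfolding I_def by (auto intro!: sets.countable_UN')
  have "emeasure lebesgue (\<Union>i\<in>C. I i) = (\<integral>\<^sup>+i. emeasure lebesgue (I i) \<partial>count_space C)"
    by (rule emeasure_UN_countable[OF _ C(1) disj]) (simp add: I_def)
  also have "\<dots> \<le> (\<integral>\<^sup>+i. ennreal (2 / M) * emeasure (interval_measure f) (I i) \<partial>count_space C)"
  proof (rule nn_integral_mono)
    fix i assume "i \<in> space (count_space C)"
    then have i: "i \<in> K" using C by auto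
    have rc: "\<And>a. continuous (at_right a) f"
      using cont by (simp add: continuous_on_eq_continuous_within continuous_at_imp_continuous_within)
    have "emeasure (interval_measure f) (I i) = ennreal (f (fst i + snd i) - f (fst i - snd i))"
      unfolding I_def using i rc mono unfolding K_def mono_def
      by (subst emeasure_interval_measure_Ioc) auto
    moreover have "emeasure lebesgue (I i) = ennreal (2 * snd i)"
      using i unfolding I_def K_def by auto
    moreover have "2 * snd i \<le> 2 / M * (f (fst i + snd i) - f (fst i - snd i))"
      using i M0 unfolding K_def by (auto simp: field_simps)
    moreover have "f (fst i + snd i) - f (fst i - snd i) \<ge> 0" using i M0 unfolding K_def by clarsimp (smt (verit) mult_pos_pos)
    ultimately show "emeasure lebesgue (I i) \<le> ennreal (2 / M) * emeasure (interval_measure f) (I i)"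
      using M0 by (simp add: ennreal_mult[symmetric] ennreal_leI del: times_divide_eq_left)
  qed
  also have "\<dots> = ennreal (2 / M) * (\<integral>\<^sup>+i. emeasure (interval_measure f) (I i) \<partial>count_space C)"
    by (rule nn_integral_cmult) simp
  also have "(\<integral>\<^sup>+i. emeasure (interval_measure f) (I i) \<partial>count_space C) = emeasure (interval_measure f) (\<Union>i\<in>C. I i)"
    by (rule emeasure_UN_countable[OF _ C(1) disj, symmetric]) (simp add: I_def)
  also have "emeasure (interval_measure f) (\<Union>i\<in>C. I i) \<le> emeasure (interval_measure f) {-R-1<..R+1}"
  proof (rule emeasure_mono)
    show "(\<Union>i\<in>C. I i) \<subseteq> {-R-1<..R+1}"
    proof
      fix y assume "y \<in> (\<Union>i\<in>C. I i)"
      then obtain i where i: "i \<in> C" "y \<in> I i" by blast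
      then have "\<bar>fst i\<bar> < R" "0 < snd i" "snd i < 1"
        using C unfolding K_def S_def by (auto simp: dist_real_def)
      then show "y \<in> {-R-1<..R+1}" using i(2) unfolding I_def by auto
    qed
  qed simp
  also have "emeasure (interval_measure f) {-R-1<..R+1} = ennreal B"
    unfolding B_def using mono cont R0
    by (subst emeasure_interval_measure_Ioc)
       (auto simp: mono_def continuous_on_eq_continuous_within continuous_at_imp_continuous_within)
  finally have bnd: "emeasure lebesgue (\<Union>i\<in>C. I i) \<le> ennreal (2 / M) * ennreal B" by (simp add: mult_left_mono)
  have "emeasure lebesgue T \<le> emeasure lebesgue (S - (\<Union>i \<in> C. ball (fst i) (snd i))) + emeasure lebesgue (\<Union>i\<in>C. I i)"
    unfolding T_def by (rule emeasure_subadditive) (use negm Ims in auto)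
  also have "\<dots> \<le> ennreal (2 / M) * ennreal B" using null_setsD1[OF negm] bnd by simp
  also have "\<dots> = ennreal (2 / M * B)" using M0 B0 by (simp add: ennreal_mult[symmetric] del: times_divide_eq_left)
  also have "\<dots> \<le> ennreal e" using B0 e unfolding M_def by (intro ennreal_leI) (simp add: field_simps)
  finally have "emeasure lebesgue T \<le> ennreal e" .
  moreover have "T \<in> sets lebesgue" unfolding T_def using negm Ims by auto
  ultimately show "\<exists>T. L_inf f \<inter> ball 0 R \<subseteq> T \<and> T \<in> sets lebesgue \<and> emeasure lebesgue T \<le> ennreal e"
    using \<open>S \<subseteq> T\<close> unfolding S_def by blast
qed

lemma forward_null:
  assumes "mono f" "continuous_on UNIV f"
  shows "L_inf f \<in> null_sets lebesgue"
proof -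
  have "L_inf f = (\<Union>n::nat. L_inf f \<inter> ball 0 (real n))"
  proof (intro set_eqI iffI)
    fix x assume "x \<in> L_inf f"
    moreover obtain n where "\<bar>x\<bar> < real n" using reals_Archimedean2 by blast
    ultimately show "x \<in> (\<Union>n::nat. L_inf f \<inter> ball 0 (real n))" by auto
  qed auto
  moreover have "negligible (\<Union>n::nat. L_inf f \<inter> ball 0 (real n))"
    by (rule negligible_Union_nat) (rule forward_null_ball[OF assms], simp)
  ultimately show ?thesis using negligible_iff_null_sets by metis
qed



lemma ennreal_geom:
  assumes "c \<ge> 0" "0 \<le> q" "q < 1"
  shows "(\<Sum>k. ennreal (c * q^k)) = ennreal (c / (1 - q))"
proof (rule suminf_ennreal_eq)
  show "0 \<le> c * q ^ k" for k using assms by simp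
  have "(\<lambda>k. q^k) sums (1 / (1 - q))" using assms by (intro geometric_sums) auto
  from sums_mult[OF this, of c] show "(\<lambda>k. c * q ^ k) sums (c / (1 - q))" by simp
qed

lemma ennreal_suminf_le:
  fixes f g :: "nat \<Rightarrow> ennreal"
  shows "(\<And>n. f n \<le> g n) \<Longrightarrow> suminf f \<le> suminf g"
  by (rule suminf_le) auto

lemma null_outer_open:
  assumes "N \<in> null_sets lebesgue" "e > 0"
  obtains T where "open T" "N \<subseteq> T" "emeasure lebesgue T \<le> ennreal e"
proof -
  obtain T where T: "open T" "N \<subseteq> T" "(T - N) \<in> lmeasurable" "emeasure lebesgue (T - N) < ennreal e"
    using sets_lebesgue_outer_open[of N e] assms by auto
  have "emeasure lebesgue T \<le> emeasure lebesgue N + emeasure lebesgue (T - N)"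
    by (rule emeasure_subadditive[of N lebesgue "T - N", simplified Un_absorb1[OF \<open>N \<subseteq> T\<close>] Un_Diff_cancel])
       (use assms T in auto)
  also have "\<dots> \<le> ennreal e" using T(4) null_setsD1[OF assms(1)] by simp
  finally show ?thesis using T that by blast
qed

lemma int_cases_nat: "\<exists>n::nat. j = int n \<or> j = - int n - 1"
  by (cases "j \<ge> 0") (rule exI[of _ "nat j"], simp, rule exI[of _ "nat (-j-1)"], simp)

lemma count_J:
  fixes s x \<rho> :: real
  assumes "s > 0" "\<rho> \<ge> 0"
  shows "finite {j::int. real_of_int j * s < x + \<rho> \<and> x - \<rho> < real_of_int (j+2) * s}"
    "real (card {j::int. real_of_int j * s < x + \<rho> \<and> x - \<rho> < real_of_int (j+2) * s}) \<le> 2 * \<rho> / s + 3"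
proof -
  define J where "J = {j::int. real_of_int j * s < x + \<rho> \<and> x - \<rho> < real_of_int (j+2) * s}"
  define lo where "lo = \<lfloor>(x - \<rho>) / s\<rfloor> - 1"
  define hi where "hi = \<lfloor>(x + \<rho>) / s\<rfloor>"
  have sub: "J \<subseteq> {lo..hi}"
  proof
    fix j assume "j \<in> J"
    then have a: "real_of_int j * s < x + \<rho>" and b: "x - \<rho> < real_of_int (j+2) * s" unfolding J_def by auto
    from a have "real_of_int j < (x + \<rho>) / s" using assms by (simp add: pos_less_divide_eq)
    then have "j \<le> hi" unfolding hi_def by (simp add: le_floor_iff)
    moreover from b have "(x - \<rho>) / s < real_of_int (j + 2)" using assms by (simp add: pos_divide_less_eq)
    then have "\<lfloor>(x - \<rho>) / s\<rfloor> < j + 2" by (simp add: floor_less_iff)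
    then have "lo \<le> j" unfolding lo_def by simp
    ultimately show "j \<in> {lo..hi}" by simp
  qed
  show "finite {j::int. real_of_int j * s < x + \<rho> \<and> x - \<rho> < real_of_int (j+2) * s}"
    using finite_subset[OF sub] J_def by simp
  have "card J \<le> card {lo..hi}" by (rule card_mono[OF _ sub]) simp
  then have "real (card J) \<le> real (nat (hi - lo + 1))" by simp
  also have "\<dots> \<le> 2 * \<rho> / s + 3"
  proof -
    have "real_of_int hi \<le> (x + \<rho>) / s" unfolding hi_def by simp
    moreover have "(x - \<rho>) / s - 1 < real_of_int \<lfloor>(x - \<rho>) / s\<rfloor>" by linarith
    moreover have "(x + \<rho>) / s - (x - \<rho>) / s = 2 * \<rho> / s" using assms by (simp add: field_simps)
    moreover have "2 * \<rho> / s \<ge> 0" using assms by simp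
    ultimately show ?thesis unfolding lo_def by (cases "hi - (\<lfloor>(x - \<rho>) / s\<rfloor> - 1) + 1 \<ge> 0") (simp_all, linarith)
  qed
  finally show "real (card {j::int. real_of_int j * s < x + \<rho> \<and> x - \<rho> < real_of_int (j+2) * s}) \<le> 2 * \<rho> / s + 3"
    unfolding J_def .
qed

lemma sparse_cover:
  fixes U E :: "real set" and \<epsilon> :: real
  assumes U: "open U" and EU: "E \<subseteq> U" and En: "E \<in> null_sets lebesgue" and e: "\<epsilon> > 0"
  shows "\<exists>V. open V \<and> E \<subseteq> V \<and> V \<subseteq> U \<and> emeasure lebesgue V \<le> ennreal \<epsilon> \<and>
     (\<forall>x \<rho> z. 0 < \<rho> \<longrightarrow> z \<notin> U \<longrightarrow> dist x z < 5*\<rho> \<longrightarrow> emeasure lebesgue (V \<inter> {x-\<rho><..x+\<rho>}) \<le> ennreal (\<epsilon>*\<rho>))"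
proof -
  define \<theta> where "\<theta> = \<epsilon>/40"
  have th: "\<theta> > 0" using e unfolding \<theta>_def by simp
  define s where "s k = (1/2::real)^k" for k::nat
  have s0: "s k > 0" for k unfolding s_def by simp
  define A where "A k j = {t. \<exists>r>s k. ball t r \<subseteq> U} \<inter> {real_of_int j * s k <..< real_of_int (j+2) * s k}" for k j
  define b where "b k j = \<theta> * (1/4)^k * (1/2)^(nat \<bar>j\<bar>)" for k::nat and j::int
  have b0: "b k j > 0" for k j unfolding b_def using th by simp
  have Aopen: "open (A k j)" for k j
  proof -
    have "open {t. \<exists>r>s k. ball t r \<subseteq> U}"
    proof (rule openI)
      fix t assume "t \<in> {t. \<exists>r>s k. ball t r \<subseteq> U}"
      then obtain r where r: "r > s k" "ball t r \<subseteq> U" by auto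
      have "ball t (r - s k) \<subseteq> {t. \<exists>r>s k. ball t r \<subseteq> U}"
      proof
        fix t' assume t': "t' \<in> ball t (r - s k)"
        have "ball t' (r - dist t t') \<subseteq> U"
        proof
          fix y assume "y \<in> ball t' (r - dist t t')"
          then have "dist t y < r" using dist_triangle[of t y t'] by simp
          then show "y \<in> U" using r(2) by auto
        qed
        moreover have "r - dist t t' > s k" using t' by (simp add: dist_commute)
        ultimately show "t' \<in> {t. \<exists>r>s k. ball t r \<subseteq> U}" by auto
      qed
      then show "\<exists>e>0. ball t e \<subseteq> {t. \<exists>r>s k. ball t r \<subseteq> U}" using r(1) by (intro exI[of _ "r - s k"]) auto
    qed
    then show ?thesis unfolding A_def by (intro open_Int) auto
  qed
  have AU: "A k j \<subseteq> U" for k j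
    unfolding A_def using s0 by (auto simp: subset_eq) (meson centre_in_ball le_less_trans less_imp_le s0)
  have "\<exists>W. open W \<and> E \<inter> A k j \<subseteq> W \<and> W \<subseteq> A k j \<and> emeasure lebesgue W \<le> ennreal (b k j)" for k j
  proof -
    have "E \<inter> A k j \<in> null_sets lebesgue"
      by (rule null_set_Int2[OF En]) (use Aopen in auto)
    then obtain T where T: "open T" "E \<inter> A k j \<subseteq> T" "emeasure lebesgue T \<le> ennreal (b k j)"
      using null_outer_open b0 by blast
    have "emeasure lebesgue (T \<inter> A k j) \<le> emeasure lebesgue T"
      by (rule emeasure_mono) (use T(1) in auto)
    then show ?thesis using T Aopen by (intro exI[of _ "T \<inter> A k j"]) auto
  qed
  then obtain W where W: "\<And>k j. open (W k j)" "\<And>k j. E \<inter> A k j \<subseteq> W k j" "\<And>k j. W k j \<subseteq> A k j"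
     "\<And>k j. emeasure lebesgue (W k j) \<le> ennreal (b k j)"
    by metis
  define Vk where "Vk k = (\<Union>j. W k j)" for k
  define V where "V = (\<Union>k. Vk k)"
  have Vopen: "open V" unfolding V_def Vk_def using W(1) by auto
  have VU: "V \<subseteq> U" unfolding V_def Vk_def using W(3) AU by blast
  have EV: "E \<subseteq> V"
  proof
    fix t assume "t \<in> E"
    then have "t \<in> U" using EU by auto
    then obtain r where r: "r > 0" "ball t r \<subseteq> U" using U open_contains_ball by blast
    obtain k where k: "(1/2::real)^k < r" using real_arch_pow_inv[OF r(1), of "1/2"] by auto
    define j where "j = \<lfloor>t / s k\<rfloor> - 1"
    have f1: "real_of_int \<lfloor>t / s k\<rfloor> \<le> t / s k" "t / s k < real_of_int \<lfloor>t / s k\<rfloor> + 1" by linarith+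
    have "real_of_int \<lfloor>t / s k\<rfloor> * s k \<le> t / s k * s k"
      by (rule mult_right_mono[OF f1(1)]) (use s0[of k] in simp)
    moreover have "t / s k * s k < (real_of_int \<lfloor>t / s k\<rfloor> + 1) * s k"
      by (rule mult_strict_right_mono[OF f1(2)]) (use s0[of k] in simp)
    ultimately have "real_of_int \<lfloor>t / s k\<rfloor> * s k \<le> t" "t < (real_of_int \<lfloor>t / s k\<rfloor> + 1) * s k"
      using s0[of k] by simp_all
    then have "real_of_int j * s k < t" "t < real_of_int (j+2) * s k"
      unfolding j_def using s0[of k] by (simp_all add: algebra_simps)
    moreover have "\<exists>r>s k. ball t r \<subseteq> U" using r k unfolding s_def by auto
    ultimately have "t \<in> A k j" unfolding A_def by auto
    then show "t \<in> V" using \<open>t \<in> E\<close> W(2)[of k j] unfolding V_def Vk_def by blast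
  qed
  have Wm: "W k j \<in> sets lebesgue" for k j using W(1) by auto
  have Vkm: "Vk k \<in> sets lebesgue" for k unfolding Vk_def using W(1) by auto
  have Vk_bound: "emeasure lebesgue (Vk k) \<le> ennreal (3 * \<theta> * (1/4)^k)" for k
  proof -
    have "Vk k = (\<Union>n. W k (int n) \<union> W k (- int n - 1))"
      unfolding Vk_def
    proof (intro set_eqI iffI)
      fix t assume "t \<in> (\<Union>j. W k j)"
      then obtain j where "t \<in> W k j" by auto
      moreover obtain n::nat where "j = int n \<or> j = - int n - 1" using int_cases_nat by blast
      ultimately show "t \<in> (\<Union>n. W k (int n) \<union> W k (- int n - 1))" by auto
    qed auto
    moreover have r: "range (\<lambda>n. W k (int n) \<union> W k (- int n - 1)) \<subseteq> sets lebesgue" using Wm by auto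
    ultimately have "emeasure lebesgue (Vk k) \<le> (\<Sum>n. emeasure lebesgue (W k (int n) \<union> W k (- int n - 1)))"
      by (simp only: emeasure_subadditive_countably[OF r])
    also have "\<dots> \<le> (\<Sum>n. ennreal (\<theta> * (1/4)^k * (3/2) * (1/2)^n))"
    proof (rule ennreal_suminf_le)
      fix n
      have "emeasure lebesgue (W k (int n) \<union> W k (- int n - 1)) \<le> emeasure lebesgue (W k (int n)) + emeasure lebesgue (W k (- int n - 1))"
        by (rule emeasure_subadditive) (use Wm in auto)
      also have "\<dots> \<le> ennreal (b k (int n)) + ennreal (b k (- int n - 1))"
        using W(4) by (intro add_mono) auto
      also have "\<dots> = ennreal (b k (int n) + b k (- int n - 1))"
        using b0 by (simp add: ennreal_plus less_imp_le)
      also have "b k (int n) + b k (- int n - 1) = \<theta> * (1/4)^k * (3/2) * (1/2)^n"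
      proof -
        have "nat \<bar>- int n - 1\<bar> = Suc n" by simp
        then show ?thesis unfolding b_def by (simp add: field_simps)
      qed
      finally show "emeasure lebesgue (W k (int n) \<union> W k (- int n - 1)) \<le> ennreal (\<theta> * (1/4)^k * (3/2) * (1/2)^n)" .
    qed
    also have "\<dots> = ennreal (\<theta> * (1/4)^k * (3/2) / (1 - 1/2))"
      by (rule ennreal_geom) (use th in auto)
    also have "\<dots> = ennreal (3 * \<theta> * (1/4)^k)" by (simp add: mult.assoc)
    finally show ?thesis .
  qed
  have measV: "emeasure lebesgue V \<le> ennreal \<epsilon>"
  proof -
    have "emeasure lebesgue V \<le> (\<Sum>k. emeasure lebesgue (Vk k))"
      unfolding V_def by (rule emeasure_subadditive_countably) (use Vkm in auto)
    also have "\<dots> \<le> (\<Sum>k. ennreal (3 * \<theta> * (1/4)^k))"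
      by (rule ennreal_suminf_le) (rule Vk_bound)
    also have "\<dots> = ennreal (3 * \<theta> / (1 - 1/4))"
      by (rule ennreal_geom) (use th in auto)
    also have "\<dots> \<le> ennreal \<epsilon>" using e unfolding \<theta>_def by (intro ennreal_leI) simp
    finally show ?thesis .
  qed
  have local: "emeasure lebesgue (V \<inter> {x-\<rho><..x+\<rho>}) \<le> ennreal (\<epsilon>*\<rho>)"
    if rz: "0 < \<rho>" "z \<notin> U" "dist x z < 5*\<rho>" for x \<rho> z
  proof -
    define I where "I = {x-\<rho><..x+\<rho>}"
    have key: "s k < 6 * \<rho>" if "t \<in> W k j" "t \<in> I" for t k j
    proof -
      have "t \<in> A k j" using W(3)[of k j] that(1) by blast
      then obtain r where r: "r > s k" "ball t r \<subseteq> U" unfolding A_def by auto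
      then have "dist t z \<ge> r" using rz(2) by (auto simp: not_less[symmetric])
      moreover have "dist t x \<le> \<rho>" using that(2) unfolding I_def by (auto simp: dist_real_def)
      moreover have "dist t z \<le> dist t x + dist x z" by (rule dist_triangle)
      ultimately show ?thesis using r(1) rz(3) by linarith
    qed
    have perk: "emeasure lebesgue (Vk k \<inter> I) \<le> ennreal (20 * \<theta> * \<rho> * (1/2)^k)" for k
    proof (cases "s k < 6 * \<rho>")
      case False
      then have "Vk k \<inter> I = {}" unfolding Vk_def using key by blast
      then show ?thesis by simp
    next
      case True
      define J where "J = {j::int. real_of_int j * s k < x + \<rho> \<and> x - \<rho> < real_of_int (j+2) * s k}"
      have Jfin: "finite J" and Jcard: "real (card J) \<le> 2 * \<rho> / s k + 3"
        unfolding J_def using count_J[OF s0[of k], of \<rho> x] rz(1) by auto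
      have "Vk k \<inter> I \<subseteq> (\<Union>j\<in>J. W k j)"
      proof
        fix t assume "t \<in> Vk k \<inter> I"
        then obtain j where j: "t \<in> W k j" "t \<in> I" unfolding Vk_def by auto
        then have "t \<in> A k j" using W(3) by auto
        then have "j \<in> J" using j(2) unfolding A_def J_def I_def by auto
        then show "t \<in> (\<Union>j\<in>J. W k j)" using j by auto
      qed
      then have "emeasure lebesgue (Vk k \<inter> I) \<le> emeasure lebesgue (\<Union>j\<in>J. W k j)"
        by (rule emeasure_mono) (use Wm Jfin in auto)
      also have "\<dots> \<le> (\<Sum>j\<in>J. emeasure lebesgue (W k j))"
        by (rule emeasure_subadditive_finite[OF Jfin]) (use Wm in auto)
      also have "\<dots> \<le> (\<Sum>j\<in>J. ennreal (\<theta> * (1/4)^k))"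
      proof (rule sum_mono)
        fix j assume "j \<in> J"
        have "b k j \<le> \<theta> * (1/4)^k" unfolding b_def using th by (simp add: power_le_one)
        then show "emeasure lebesgue (W k j) \<le> ennreal (\<theta> * (1/4)^k)"
          using W(4)[of k j] by (meson ennreal_leI order_trans)
      qed
      also have "\<dots> = ennreal (real (card J) * (\<theta> * (1/4)^k))"
        using th by (simp add: sum_ennreal ennreal_mult ennreal_of_nat_eq_real_of_nat)
      also have "\<dots> \<le> ennreal (20 * \<theta> * \<rho> * (1/2)^k)"
      proof (rule ennreal_leI)
        have q: "(1/4::real)^k = s k * (1/2)^k" unfolding s_def by (simp add: power_mult_distrib[symmetric])
        have "real (card J) * (\<theta> * (1/4)^k) \<le> (2 * \<rho> / s k + 3) * (\<theta> * (1/4)^k)"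
          by (rule mult_right_mono[OF Jcard]) (use th in simp)
        also have "\<dots> = \<theta> * (2 * \<rho> * (1/2)^k + 3 * s k * (1/2)^k)"
          unfolding q using s0[of k] by (simp add: field_simps)
        also have "\<dots> \<le> \<theta> * (2 * \<rho> * (1/2)^k + 3 * (6 * \<rho>) * (1/2)^k)"
          using True th by (intro mult_left_mono add_left_mono mult_right_mono) auto
        also have "\<dots> = 20 * \<theta> * \<rho> * (1/2)^k" by (simp add: field_simps)
        finally show "real (card J) * (\<theta> * (1/4)^k) \<le> 20 * \<theta> * \<rho> * (1/2)^k" .
      qed
      finally show ?thesis .
    qed
    have "V \<inter> I = (\<Union>k. Vk k \<inter> I)" unfolding V_def by auto
    moreover have r: "range (\<lambda>k. Vk k \<inter> I) \<subseteq> sets lebesgue" using Vkm unfolding I_def by auto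
    ultimately have "emeasure lebesgue (V \<inter> I) \<le> (\<Sum>k. emeasure lebesgue (Vk k \<inter> I))"
      by (simp only: emeasure_subadditive_countably[OF r])
    also have "\<dots> \<le> (\<Sum>k. ennreal (20 * \<theta> * \<rho> * (1/2)^k))"
      by (rule ennreal_suminf_le) (rule perk)
    also have "\<dots> = ennreal (20 * \<theta> * \<rho> / (1 - 1/2))"
      by (rule ennreal_geom) (use th rz in auto)
    also have "\<dots> = ennreal (\<epsilon> * \<rho>)" unfolding \<theta>_def by simp
    finally show ?thesis unfolding I_def .
  qed
  show ?thesis using Vopen EV VU measV local by blast
qed



definition eps :: "nat \<Rightarrow> real" where "eps m = (1/4)^m / (m + 1)"
definition acoef :: "nat \<Rightarrow> real" where "acoef m = (if odd m then real m else 0)"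

lemma eps_pos: "eps m > 0" unfolding eps_def by simp
lemma eps_le1: "eps m \<le> 1"
proof -
  have "(1/4::real)^m \<le> 1 * (m+1)" by (rule order_trans[OF power_le_one]) auto
  then show ?thesis unfolding eps_def by (simp add: divide_le_eq)
qed

lemma quarter_half: "(1/4::real)^m \<le> (1/2)^m"
  by (rule power_mono) auto
lemma acoef_nonneg: "acoef m \<ge> 0" unfolding acoef_def by simp
lemma acoef_le: "acoef m \<le> real m" unfolding acoef_def by simp
lemma acoef_eps: "acoef m * eps m \<le> (1/4)^m"
proof -
  have "acoef m * eps m \<le> real m * eps m" using acoef_le eps_pos by (intro mult_right_mono) (auto simp: less_imp_le)
  also have "\<dots> = (real m / (m+1)) * (1/4)^m" unfolding eps_def by simp
  also have "\<dots> \<le> 1 * (1/4)^m" by (intro mult_right_mono) auto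
  finally show ?thesis by simp
qed

lemma quarter_le: "m \<ge> N \<Longrightarrow> (1/4::real)^m \<le> (1/2)^N * (1/2)^m"
proof -
  assume "m \<ge> N"
  have "(1/4::real)^m = (1/2)^m * (1/2)^m" by (simp add: power_mult_distrib[symmetric])
  also have "\<dots> \<le> (1/2)^N * (1/2)^m" using \<open>m \<ge> N\<close> by (intro mult_right_mono power_decreasing) auto
  finally show ?thesis .
qed

lemma series_bound:
  fixes g :: "nat \<Rightarrow> real"
  assumes g0: "\<And>m. 0 \<le> g m" and gb: "\<And>m. g m \<le> (if m < N then c else 0) + K * (1/2)^m"
    and c: "0 \<le> c" and K: "0 \<le> K"
  shows "summable g" "suminf g \<le> real N * c + 2 * K"
proof -
  define h1 where "h1 m = (if m < N then c else 0)" for m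
  define h2 where "h2 m = K * (1/2::real)^m" for m
  have s1: "summable h1" unfolding h1_def by (rule summable_finite[of "{..<N}"]) auto
  have e1: "suminf h1 = real N * c" unfolding h1_def by (subst suminf_finite[of "{..<N}"]) auto
  have s2: "h2 sums (2 * K)" unfolding h2_def using sums_mult[OF geometric_sums[of "1/2::real"], of K] by (simp add: mult.commute)
  have sh: "summable (\<lambda>m. h1 m + h2 m)" using s1 s2 by (intro summable_add) (auto simp: sums_iff)
  show sg: "summable g"
    by (rule summable_comparison_test'[OF sh]) (use g0 gb in \<open>auto simp: h1_def h2_def\<close>)
  have "suminf g \<le> suminf (\<lambda>m. h1 m + h2 m)"
    by (rule suminf_le[OF _ sg sh]) (use gb in \<open>auto simp: h1_def h2_def\<close>)
  also have "\<dots> = suminf h1 + suminf h2"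
    using suminf_add[OF s1 sums_summable[OF s2]] by simp
  also have "\<dots> = real N * c + 2 * K" using e1 s2 by (simp add: sums_iff)
  finally show "suminf g \<le> real N * c + 2 * K" .
qed

lemma term_le_suminf:
  fixes g :: "nat \<Rightarrow> real"
  assumes "summable g" "\<And>m. 0 \<le> g m"
  shows "g n \<le> suminf g"
  using sum_le_suminf[OF assms(1), of "{n}"] assms(2) by simp

lemma measure_le_of_emeasure:
  "emeasure M A \<le> ennreal c \<Longrightarrow> 0 \<le> c \<Longrightarrow> measure M A \<le> c"
  by (simp add: measure_def enn2real_leI)

locale constr =
  fixes E :: "real set" and G :: "nat \<Rightarrow> real set"
  assumes G0: "G 0 = UNIV"
    and Gopen: "\<And>m. open (G m)"
    and Gdec: "\<And>m. G (Suc m) \<subseteq> G m"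
    and GE: "\<And>m. E \<subseteq> G m"
    and Ginter: "(\<Inter>m. G m) \<subseteq> E"
    and Enull: "E \<in> null_sets lebesgue"
    and Gmeas: "\<And>m. emeasure lebesgue (G (Suc m)) \<le> ennreal (eps (Suc m))"
    and Gsparse: "\<And>m x \<rho> z. \<rho> > 0 \<Longrightarrow> z \<notin> G m \<Longrightarrow> dist x z < 5 * \<rho> \<Longrightarrow>
        emeasure lebesgue (G (Suc m) \<inter> {x-\<rho><..x+\<rho>}) \<le> ennreal (eps (Suc m) * \<rho>)"
begin

definition H where "H m = G m - G (Suc m)"
definition f where "f x = (\<Sum>m. acoef m * measure lebesgue (H m \<inter> {..x}))"

lemma G_anti: "m \<le> n \<Longrightarrow> G n \<subseteq> G m"
  by (induction n rule: dec_induct) (use Gdec in auto)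

lemma Gsets: "G m \<in> sets lebesgue" using Gopen by auto
lemma Hsets: "H m \<in> sets lebesgue" unfolding H_def using Gsets by auto

lemma G_fin: "m \<ge> 1 \<Longrightarrow> emeasure lebesgue (G m) \<le> ennreal (eps m)"
  using Gmeas[of "m - 1"] by simp

lemma term_bound:
  assumes S: "S \<in> sets lebesgue"
  shows "0 \<le> acoef m * measure lebesgue (H m \<inter> S)" "acoef m * measure lebesgue (H m \<inter> S) \<le> (1/4)^m"
proof -
  show "0 \<le> acoef m * measure lebesgue (H m \<inter> S)" using acoef_nonneg by simp
  show "acoef m * measure lebesgue (H m \<inter> S) \<le> (1/4)^m"
  proof (cases "m = 0")
    case True then show ?thesis by (simp add: acoef_def)
  next
    case False
    have "emeasure lebesgue (H m \<inter> S) \<le> emeasure lebesgue (G m)"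
      by (rule emeasure_mono) (auto simp: H_def Gsets)
    also have "\<dots> \<le> ennreal (eps m)" using G_fin False by simp
    finally have "measure lebesgue (H m \<inter> S) \<le> eps m"
      using eps_pos less_imp_le measure_le_of_emeasure by blast
    then have "acoef m * measure lebesgue (H m \<inter> S) \<le> acoef m * eps m"
      using acoef_nonneg by (rule mult_left_mono)
    then show ?thesis using acoef_eps order_trans by blast
  qed
qed

lemma term_summable:
  assumes S: "S \<in> sets lebesgue"
  shows "summable (\<lambda>m. acoef m * measure lebesgue (H m \<inter> S))"
proof (rule series_bound(1)[where N=0 and c=0 and K=1])
  fix m
  show "0 \<le> acoef m * measure lebesgue (H m \<inter> S)" by (rule term_bound(1)[OF S])
  show "acoef m * measure lebesgue (H m \<inter> S) \<le> (if m < 0 then 0 else 0) + 1 * (1/2)^m"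
    using term_bound(2)[OF S, of m] quarter_half[of m] by simp
qed auto

lemma H_fin: "m \<ge> 1 \<Longrightarrow> emeasure lebesgue (H m \<inter> S) \<noteq> \<infinity>"
proof -
  assume "m \<ge> 1"
  have "emeasure lebesgue (H m \<inter> S) \<le> emeasure lebesgue (G m)"
    by (rule emeasure_mono) (auto simp: H_def Gsets)
  also have "\<dots> \<le> ennreal (eps m)" using G_fin \<open>m \<ge> 1\<close> by simp
  finally show ?thesis using ennreal_less_top[of "eps m"] by (auto simp: top_unique)
qed

lemma f_diff:
  assumes "x \<le> y"
  shows "f y - f x = (\<Sum>m. acoef m * measure lebesgue (H m \<inter> {x<..y}))"
proof -
  have eq: "acoef m * measure lebesgue (H m \<inter> {..y}) = acoef m * measure lebesgue (H m \<inter> {..x}) + acoef m * measure lebesgue (H m \<inter> {x<..y})" for m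
  proof (cases "m = 0")
    case True then show ?thesis by (simp add: acoef_def)
  next
    case False
    have "H m \<inter> {..y} = (H m \<inter> {..x}) \<union> (H m \<inter> {x<..y})" using assms by auto
    moreover have "measure lebesgue ((H m \<inter> {..x}) \<union> (H m \<inter> {x<..y})) = measure lebesgue (H m \<inter> {..x}) + measure lebesgue (H m \<inter> {x<..y})"
      by (rule measure_Union) (use H_fin[of m] False Hsets[of m] in auto)
    ultimately show ?thesis by (simp add: distrib_left)
  qed
  have "f y = (\<Sum>m. acoef m * measure lebesgue (H m \<inter> {..x}) + acoef m * measure lebesgue (H m \<inter> {x<..y}))"
    unfolding f_def eq ..
  also have "\<dots> = f x + (\<Sum>m. acoef m * measure lebesgue (H m \<inter> {x<..y}))"
    unfolding f_def by (rule suminf_add[symmetric]) (rule term_summable; simp)+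
  finally show ?thesis by simp
qed

lemma f_mono: "mono f"
proof (rule monoI)
  fix x y :: real assume "x \<le> y"
  have "0 \<le> (\<Sum>m. acoef m * measure lebesgue (H m \<inter> {x<..y}))"
    by (rule suminf_nonneg) (use term_summable[of "{x<..y}"] term_bound(1)[of "{x<..y}"] in auto)
  then show "f x \<le> f y" using f_diff[OF \<open>x \<le> y\<close>] by simp
qed

lemma Delta:
  assumes "r > 0"
  shows "f (x+r) - f (x-r) = (\<Sum>m. acoef m * measure lebesgue (H m \<inter> {x-r<..x+r}))"
  using f_diff[of "x-r" "x+r"] assms by simp

lemma Dm_bounds:
  assumes "r > 0"
  shows "Dm f x r \<le> (f (x+r) - f (x-r)) / r" "(f (x+r) - f (x-r)) / (2*r) \<le> Dm f x r"
proof -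
  have a: "f x \<le> f (x+r)" "f (x-r) \<le> f x" using f_mono assms unfolding mono_def by auto
  show "Dm f x r \<le> (f (x+r) - f (x-r)) / r"
    unfolding Dm_def using a assms by (intro divide_right_mono) auto
  have "(f (x+r) - f (x-r)) / (2*r) = ((f (x+r) - f (x-r)) / 2) / r" by simp
  also have "\<dots> \<le> Dm f x r"
    unfolding Dm_def using a assms by (intro divide_right_mono) (auto simp: max_def)
  finally show "(f (x+r) - f (x-r)) / (2*r) \<le> Dm f x r" .
qed

lemma meas_I_le:
  assumes "r \<ge> 0"
  shows "measure lebesgue (H m \<inter> {x-r<..x+r}) \<le> 2*r"
proof -
  have "emeasure lebesgue (H m \<inter> {x-r<..x+r}) \<le> emeasure lebesgue {x-r<..x+r}"
    by (rule emeasure_mono) auto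
  also have "\<dots> = ennreal (2*r)" using assms by simp
  finally have "emeasure lebesgue (H m \<inter> {x-r<..x+r}) \<le> ennreal (2*r)" .
  then show ?thesis by (rule measure_le_of_emeasure) (use assms in simp)
qed

lemma Isets: "{a<..b::real} \<in> sets lebesgue" by simp

lemma f_cont: "continuous_on UNIV f"
proof -
  have "isCont f x" for x
    unfolding continuous_at_eps_delta
  proof (intro allI impI)
    fix e :: real assume e: "e > 0"
    obtain N where N: "(1/2::real)^N < e/4" using real_arch_pow_inv[of "e/4" "1/2"] e by auto
    define \<delta> where "\<delta> = e / (4 * (real N * real N + 1))"
    have d0: "\<delta> > 0" using e unfolding \<delta>_def by (intro divide_pos_pos) (auto intro: add_nonneg_pos)
    have gb: "acoef m * measure lebesgue (H m \<inter> {x-\<delta><..x+\<delta>}) \<le> (if m < N then real N * (2*\<delta>) else 0) + (1/2)^N * (1/2)^m" for m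
    proof (cases "m < N")
      case True
      have "acoef m * measure lebesgue (H m \<inter> {x-\<delta><..x+\<delta>}) \<le> real N * (2*\<delta>)"
        using acoef_le[of m] acoef_nonneg[of m] meas_I_le[of \<delta> m x] d0 True
        by (intro mult_mono) auto
      then have "acoef m * measure lebesgue (H m \<inter> {x-\<delta><..x+\<delta>}) \<le> real N * (2*\<delta>) + (1/2)^N * (1/2)^m"
        by (rule add_increasing2[rotated]) simp
      then show ?thesis using True by simp
    next
      case False
      then show ?thesis using term_bound(2)[OF Isets, of m "x-\<delta>" "x+\<delta>"] quarter_le[of N m] by simp
    qed
    have "f (x+\<delta>) - f (x-\<delta>) \<le> real N * (real N * (2*\<delta>)) + 2 * (1/2)^N"
      unfolding Delta[OF d0]
      by (rule series_bound(2)[OF _ gb]) (use term_bound(1)[OF Isets] d0 in auto)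
    also have "\<dots> < e"
    proof -
      have pos: "real N * real N + 1 > 0" by (simp add: add_nonneg_pos)
      have eq: "\<delta> * (4 * (real N * real N + 1)) = e" unfolding \<delta>_def using pos by simp
      have "real N * (real N * (2*\<delta>)) \<le> (real N * real N + 1) * (2*\<delta>)" using d0 by (simp add: algebra_simps)
      also have "\<dots> = e/2" using eq by (simp add: algebra_simps)
      finally show ?thesis using N by simp
    qed
    finally have Dl: "f (x+\<delta>) - f (x-\<delta>) < e" .
    show "\<exists>d>0. \<forall>x'. dist x' x < d \<longrightarrow> dist (f x') (f x) < e"
    proof (intro exI[of _ \<delta>] conjI allI impI)
      fix y assume "dist y x < \<delta>"
      then have "x - \<delta> \<le> y" "y \<le> x + \<delta>" by (auto simp: dist_real_def)
      then have "f (x-\<delta>) \<le> f y" "f y \<le> f (x+\<delta>)" "f (x-\<delta>) \<le> f x" "f x \<le> f (x+\<delta>)"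
        using f_mono d0 unfolding mono_def by auto
      then show "dist (f y) (f x) < e" using Dl by (auto simp: dist_real_def)
    qed (rule d0)
  qed
  then show ?thesis by (simp add: continuous_at_imp_continuous_on)
qed

lemma meas_G_I:
  assumes "r > 0" "z \<notin> G m" "dist x z < 5 * r"
  shows "acoef (Suc m) * measure lebesgue (H (Suc m) \<inter> {x-r<..x+r}) \<le> (1/4)^(Suc m) * r"
proof -
  have "emeasure lebesgue (H (Suc m) \<inter> {x-r<..x+r}) \<le> emeasure lebesgue (G (Suc m) \<inter> {x-r<..x+r})"
    by (rule emeasure_mono) (auto simp: H_def Gsets)
  also have "\<dots> \<le> ennreal (eps (Suc m) * r)" by (rule Gsparse[OF assms])
  finally have "measure lebesgue (H (Suc m) \<inter> {x-r<..x+r}) \<le> eps (Suc m) * r"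
    by (rule measure_le_of_emeasure) (use eps_pos assms in \<open>simp add: less_imp_le\<close>)
  then have "acoef (Suc m) * measure lebesgue (H (Suc m) \<inter> {x-r<..x+r}) \<le> acoef (Suc m) * (eps (Suc m) * r)"
    using acoef_nonneg by (rule mult_left_mono)
  also have "\<dots> = (acoef (Suc m) * eps (Suc m)) * r" by simp
  also have "\<dots> \<le> (1/4)^(Suc m) * r" using assms(1) by (intro mult_right_mono[OF acoef_eps]) auto
  finally show ?thesis .
qed

lemma outside:
  assumes "x \<notin> E"
  shows "\<exists>K. \<forall>r>0. Dm f x r \<le> K"
proof -
  obtain N where N: "x \<notin> G N" using assms Ginter by blast
  have "Dm f x r \<le> real (Suc N) * (real N * 2) + 2" if r: "r > 0" for r
  proof -
    have gb: "acoef m * measure lebesgue (H m \<inter> {x-r<..x+r}) \<le> (if m < Suc N then real N * (2*r) else 0) + r * (1/2)^m" for m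
    proof (cases "m < Suc N")
      case True
      have "acoef m * measure lebesgue (H m \<inter> {x-r<..x+r}) \<le> real N * (2*r)"
        using acoef_le[of m] acoef_nonneg[of m] meas_I_le[of r m x] r True
        by (intro mult_mono) auto
      then have "acoef m * measure lebesgue (H m \<inter> {x-r<..x+r}) \<le> real N * (2*r) + r * (1/2)^m"
        by (rule add_increasing2[rotated]) (use r in simp)
      then show ?thesis using True by simp
    next
      case False
      then obtain m' where m': "m = Suc m'" "m' \<ge> N" by (cases m) auto
      have "x \<notin> G m'" using N G_anti[OF m'(2)] by blast
      then have "acoef m * measure lebesgue (H m \<inter> {x-r<..x+r}) \<le> (1/4)^m * r"
        using meas_G_I[of r x m' x] r m'(1) by simp
      also have "\<dots> \<le> r * (1/2)^m" using quarter_half[of m] r by (simp add: mult.commute)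
      finally show ?thesis using False by simp
    qed
    have "f (x+r) - f (x-r) \<le> real (Suc N) * (real N * (2*r)) + 2 * r"
      unfolding Delta[OF r]
      by (rule series_bound(2)[OF _ gb]) (use term_bound(1)[OF Isets] r in auto)
    then have "(f (x+r) - f (x-r)) / r \<le> (real (Suc N) * (real N * (2*r)) + 2 * r) / r"
      using r by (intro divide_right_mono) auto
    also have "\<dots> = real (Suc N) * (real N * 2) + 2" using r by (simp add: field_simps)
    finally show ?thesis using Dm_bounds(1)[OF r, of x] by linarith
  qed
  then show ?thesis by blast
qed

lemma G_ne_UNIV: "m \<ge> 1 \<Longrightarrow> - G m \<noteq> {}"
proof
  assume m: "m \<ge> 1" and "- G m = {}"
  then have "G m = UNIV" by auto
  then have "emeasure lebesgue {0<..eps m + 1} \<le> emeasure lebesgue (G m)" by (intro emeasure_mono) (auto simp: Gsets)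
  also have "\<dots> \<le> ennreal (eps m)" using G_fin m by simp
  finally show False using eps_pos[of m] by (simp add: less_imp_le)
qed

lemma infdist_facts:
  assumes "x \<in> E" "n \<ge> 1"
  defines "d \<equiv> infdist x (- G n)"
  shows "d > 0" "ball x d \<subseteq> G n" "\<exists>z. z \<notin> G n \<and> dist x z = d"
proof -
  have cl: "closed (- G n)" using Gopen by auto
  have xn: "x \<notin> - G n" using assms GE by auto
  show "d > 0" unfolding d_def by (rule infdist_pos_not_in_closed[OF cl G_ne_UNIV[OF assms(2)] xn])
  show "ball x d \<subseteq> G n"
  proof
    fix y assume y: "y \<in> ball x d"
    show "y \<in> G n"
    proof (rule ccontr)
      assume "y \<notin> G n"
      then have "d \<le> dist x y" unfolding d_def by (intro infdist_le) auto
      then show False using y by simp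
    qed
  qed
  obtain z where "z \<in> - G n" "infdist x (- G n) = dist x z"
    using infdist_attains_inf[OF cl G_ne_UNIV[OF assms(2)]] by blast
  then show "\<exists>z. z \<notin> G n \<and> dist x z = d" unfolding d_def by auto
qed

lemma infdist_small:
  assumes "x \<in> E" "\<delta> > 0"
  shows "\<exists>n0. \<forall>n\<ge>n0. infdist x (- G n) < \<delta>"
proof (rule ccontr)
  assume "\<not> ?thesis"
  then have H: "\<forall>n0. \<exists>n\<ge>n0. infdist x (- G n) \<ge> \<delta>" by (auto simp: not_less)
  have "ball x \<delta> \<subseteq> G m" for m
  proof -
    obtain n where n: "n \<ge> Suc m" "infdist x (- G n) \<ge> \<delta>" using H by blast
    have "ball x \<delta> \<subseteq> ball x (infdist x (- G n))" using n(2) by auto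
    also have "\<dots> \<subseteq> G n" using infdist_facts(2)[OF assms(1), of n] n(1) by simp
    also have "\<dots> \<subseteq> G m" using G_anti n(1) by simp
    finally show ?thesis .
  qed
  then have "ball x \<delta> \<subseteq> E" using Ginter by blast
  then have "negligible (ball x \<delta>)" using Enull negligible_iff_null_sets negligible_subset by blast
  moreover have "ball x \<delta> \<noteq> {}" using assms by simp
  ultimately show False using open_not_negligible by blast
qed

lemma I_sub:
  assumes "x \<in> E" "n \<ge> 1"
  shows "{x - infdist x (- G n)/4 <.. x + infdist x (- G n)/4} \<subseteq> G n"
proof -
  define d where "d = infdist x (- G n)"
  have "d > 0" using infdist_facts(1)[OF assms] unfolding d_def .
  then have "{x - d/4 <.. x + d/4} \<subseteq> ball x d" by (auto simp: dist_real_def)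
  then show ?thesis using infdist_facts(2)[OF assms] unfolding d_def by blast
qed

lemma odd_big:
  assumes "x \<in> E" "odd n"
  defines "r \<equiv> infdist x (- G n) / 4"
  shows "r > 0" "Dm f x r \<ge> real n / 2"
proof -
  have n1: "n \<ge> 1" using assms(2) by (cases n) auto
  show r0: "r > 0" unfolding r_def using infdist_facts(1)[OF assms(1) n1] by simp
  define I where "I = {x-r<..x+r}"
  have IG: "I \<subseteq> G n" unfolding I_def r_def using I_sub[OF assms(1) n1] .
  obtain z where z: "z \<notin> G n" "dist x z = 4 * r" using infdist_facts(3)[OF assms(1) n1] unfolding r_def by auto
  have sp: "emeasure lebesgue (G (Suc n) \<inter> I) \<le> ennreal (eps (Suc n) * r)"
    unfolding I_def by (rule Gsparse[OF r0 z(1)]) (use z r0 in simp)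
  have "measure lebesgue (G (Suc n) \<inter> I) \<le> eps (Suc n) * r"
    by (rule measure_le_of_emeasure[OF sp]) (use eps_pos r0 in \<open>simp add: less_imp_le\<close>)
  also have "\<dots> \<le> 1 * r" using eps_le1 r0 by (intro mult_right_mono) auto
  finally have m1: "measure lebesgue (G (Suc n) \<inter> I) \<le> r" by simp
  have HI: "H n \<inter> I = I - (G (Suc n) \<inter> I)" using IG unfolding H_def by auto
  have "measure lebesgue (I - (G (Suc n) \<inter> I)) = measure lebesgue I - measure lebesgue (G (Suc n) \<inter> I)"
  proof (rule measure_Diff)
    have "emeasure lebesgue I = ennreal (2*r)" unfolding I_def using r0 by simp
    then show "emeasure lebesgue I \<noteq> \<infinity>" by simp
  qed (auto simp: I_def Gsets)
  moreover have "measure lebesgue I = 2 * r" unfolding I_def using r0 by simp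
  ultimately have "measure lebesgue (H n \<inter> I) \<ge> r" using m1 HI by simp
  then have t: "acoef n * measure lebesgue (H n \<inter> I) \<ge> real n * r"
    using assms(2) unfolding acoef_def by (simp add: mult_left_mono)
  have "acoef n * measure lebesgue (H n \<inter> I) \<le> f (x+r) - f (x-r)"
    unfolding Delta[OF r0] I_def
    by (rule term_le_suminf[OF term_summable]) (use term_bound(1)[OF Isets] in auto)
  then have "real n * r \<le> f (x+r) - f (x-r)" using t by linarith
  then have "real n * r / (2*r) \<le> (f (x+r) - f (x-r)) / (2*r)"
    using r0 by (intro divide_right_mono) auto
  also have "\<dots> \<le> Dm f x r" by (rule Dm_bounds(2)[OF r0])
  finally show "Dm f x r \<ge> real n / 2" using r0 by simp
qed

lemma even_small:
  assumes "x \<in> E" "even n" "n \<ge> 1"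
  defines "r \<equiv> infdist x (- G n) / 4"
  shows "r > 0" "Dm f x r \<le> 2 * (1/2)^n"
proof -
  show r0: "r > 0" unfolding r_def using infdist_facts(1)[OF assms(1,3)] by simp
  define I where "I = {x-r<..x+r}"
  have IG: "I \<subseteq> G n" unfolding I_def r_def using I_sub[OF assms(1,3)] .
  obtain z where z: "z \<notin> G n" "dist x z = 4 * r" using infdist_facts(3)[OF assms(1,3)] unfolding r_def by auto
  have gb: "acoef m * measure lebesgue (H m \<inter> I) \<le> (if m < 0 then 0 else 0) + (r * (1/2)^n) * (1/2)^m" for m
  proof (cases "m \<le> n")
    case True
    have eq0: "acoef m * measure lebesgue (H m \<inter> I) = 0"
    proof (cases "m = n")
      case True then show ?thesis using assms(2) by (simp add: acoef_def)
    next
      case False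
      then have "G n \<subseteq> G (Suc m)" using \<open>m \<le> n\<close> by (intro G_anti) simp
      then have "H m \<inter> I = {}" using IG unfolding H_def by auto
      then show ?thesis by simp
    qed
    show ?thesis by (subst eq0) (use r0 in simp)
  next
    case False
    then obtain m' where m': "m = Suc m'" "m' \<ge> n" by (cases m) auto
    have "z \<notin> G m'" using z(1) G_anti[OF m'(2)] by blast
    then have "acoef m * measure lebesgue (H m \<inter> I) \<le> (1/4)^m * r"
      using meas_G_I[of r z m' x] r0 z(2) m'(1) unfolding I_def by simp
    also have "\<dots> \<le> (1/2)^n * (1/2)^m * r" using quarter_le[of n m] m' r0 by (intro mult_right_mono) auto
    finally show ?thesis by (simp add: mult_ac)
  qed
  have "f (x+r) - f (x-r) \<le> real 0 * 0 + 2 * (r * (1/2)^n)"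
    unfolding Delta[OF r0]
    by (rule series_bound(2)[OF _ gb[unfolded I_def]]) (use term_bound(1)[OF Isets] r0 in auto)
  then have "(f (x+r) - f (x-r)) / r \<le> 2 * (r * (1/2)^n) / r"
    using r0 by (intro divide_right_mono) auto
  also have "\<dots> = 2 * (1/2)^n" using r0 by simp
  finally show "Dm f x r \<le> 2 * (1/2)^n" using Dm_bounds(1)[OF r0, of x] by linarith
qed

end



lemma Liminf_zero:
  fixes g :: "real \<Rightarrow> real"
  assumes nn: "\<And>r. r > 0 \<Longrightarrow> 0 \<le> g r"
    and sm: "\<And>c \<delta>. c > 0 \<Longrightarrow> \<delta> > 0 \<Longrightarrow> \<exists>r. 0 < r \<and> r < \<delta> \<and> g r < c"
  shows "Liminf (at_right 0) (\<lambda>r. ereal (g r)) = 0"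
proof (rule antisym)
  show "0 \<le> Liminf (at_right 0) (\<lambda>r. ereal (g r))"
    by (rule Liminf_bounded) (auto simp: eventually_at_right_field nn intro!: exI[of _ 1])
  show "Liminf (at_right 0) (\<lambda>r. ereal (g r)) \<le> 0"
  proof (rule ccontr)
    assume "\<not> ?thesis"
    then have L: "0 < Liminf (at_right 0) (\<lambda>r. ereal (g r))" by simp
    obtain c :: real where c: "c > 0" "ereal c < Liminf (at_right 0) (\<lambda>r. ereal (g r))"
    proof (cases "Liminf (at_right 0) (\<lambda>r. ereal (g r))")
      case (real v)
      then show ?thesis using L that[of "v/2"] by simp
    next
      case PInf
      then show ?thesis using that[of 1] by simp
    next
      case MInf
      then show ?thesis using L by simp
    qed
    from c(2) have "eventually (\<lambda>r. ereal c < ereal (g r)) (at_right 0)" by (rule less_LiminfD)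
    then obtain b where b: "b > 0" "\<And>r. r > 0 \<Longrightarrow> r < b \<Longrightarrow> c < g r"
      unfolding eventually_at_right_field by auto
    obtain r where "0 < r" "r < b" "g r < c" using sm[OF c(1) b(1)] by blast
    then show False using b(2) by fastforce
  qed
qed

context constr
begin

lemma Dm_nonneg: "r > 0 \<Longrightarrow> 0 \<le> Dm f x r"
  using f_mono unfolding Dm_def mono_def by (auto intro!: divide_nonneg_pos simp: le_max_iff_disj)

lemma Lip_in_E:
  assumes "x \<in> E"
  shows "Lip_upper f x = \<infinity>"
  unfolding Lip_upper_Dm[OF f_mono] Limsup_inf_iff
proof (intro allI impI)
  fix K \<delta> :: real assume d: "\<delta> > 0"
  obtain n0 where n0: "\<And>n. n \<ge> n0 \<Longrightarrow> infdist x (- G n) < \<delta>" using infdist_small[OF assms d] by blast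
  define n where "n = 2 * (n0 + nat \<lceil>\<bar>K\<bar>\<rceil> + 1) + 1"
  have "odd n" unfolding n_def by simp
  have "n \<ge> n0" unfolding n_def by simp
  have "real (nat \<lceil>\<bar>K\<bar>\<rceil>) \<ge> \<bar>K\<bar>" by (rule real_nat_ceiling_ge)
  moreover have "real n = 2 * (real n0 + real (nat \<lceil>\<bar>K\<bar>\<rceil>) + 1) + 1" unfolding n_def by simp
  moreover have "real n0 \<ge> 0" "K \<le> \<bar>K\<bar>" by auto
  ultimately have "real n / 2 > K" by (smt (verit) field_sum_of_halves)
  let ?r = "infdist x (- G n) / 4"
  have "?r > 0" "Dm f x ?r \<ge> real n / 2" using odd_big[OF assms \<open>odd n\<close>] by auto
  moreover have "?r < \<delta>" using n0[OF \<open>n \<ge> n0\<close>] \<open>?r > 0\<close> by simp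
  ultimately show "\<exists>r. 0 < r \<and> r < \<delta> \<and> K < Dm f x r" using \<open>real n / 2 > K\<close>
    by (intro exI[of _ ?r]) auto
qed

lemma lip_in_E:
  assumes "x \<in> E"
  shows "lip_lower f x = 0"
  unfolding lip_lower_Dm[OF f_mono]
proof (rule Liminf_zero)
  show "\<And>r. r > 0 \<Longrightarrow> 0 \<le> Dm f x r" by (rule Dm_nonneg)
  fix c \<delta> :: real assume c: "c > 0" and d: "\<delta> > 0"
  obtain n0 where n0: "\<And>n. n \<ge> n0 \<Longrightarrow> infdist x (- G n) < \<delta>" using infdist_small[OF assms d] by blast
  obtain N where N: "(1/2::real)^N < c/2" using real_arch_pow_inv[of "c/2" "1/2"] c by auto
  define n where "n = 2 * (n0 + N + 1)"
  have "even n" "n \<ge> 1" "n \<ge> n0" "n \<ge> N" unfolding n_def by auto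
  have "(1/2::real)^n \<le> (1/2)^N" using \<open>n \<ge> N\<close> by (intro power_decreasing) auto
  let ?r = "infdist x (- G n) / 4"
  have "?r > 0" "Dm f x ?r \<le> 2 * (1/2)^n" using even_small[OF assms \<open>even n\<close> \<open>n \<ge> 1\<close>] by auto
  moreover have "?r < \<delta>" using n0[OF \<open>n \<ge> n0\<close>] \<open>?r > 0\<close> by simp
  moreover have "Dm f x ?r < c" using calculation(2) N \<open>(1/2::real)^n \<le> (1/2)^N\<close> by linarith
  ultimately show "\<exists>r. 0 < r \<and> r < \<delta> \<and> Dm f x r < c"
    by (intro exI[of _ ?r]) auto
qed

lemma Lip_out_E:
  assumes "x \<notin> E"
  shows "Lip_upper f x \<noteq> \<infinity>"
proof -
  obtain K where K: "\<And>r. r > 0 \<Longrightarrow> Dm f x r \<le> K" using outside[OF assms] by blast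
  have "Lip_upper f x \<le> ereal K"
    unfolding Lip_upper_Dm[OF f_mono]
    by (rule Limsup_bounded) (auto simp: eventually_at_right_field K intro!: exI[of _ 1])
  then show ?thesis by auto
qed

lemma L_inf_eq: "L_inf f = E"
  unfolding L_inf_def using Lip_in_E Lip_out_E by auto

lemma l_inf_eq: "l_inf f = {}"
proof -
  have "lip_lower f x \<noteq> \<infinity>" for x
  proof (cases "x \<in> E")
    case True then show ?thesis using lip_in_E by simp
  next
    case False
    have "lip_lower f x \<le> Lip_upper f x"
      unfolding lip_lower_def Lip_upper_def by (rule Liminf_le_Limsup) simp
    then show ?thesis using Lip_out_E[OF False] by auto
  qed
  then show ?thesis unfolding l_inf_def by auto
qed

end



lemma construct_G:
  assumes gd: "gdelta E" and En: "E \<in> null_sets lebesgue"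
  shows "\<exists>G. constr E G"
proof -
  obtain Op :: "nat \<Rightarrow> real set" where Op: "\<And>n. open (Op n)" and EO: "E = (\<Inter>n. Op n)"
    using gd by (cases rule: gdelta.cases) auto
  define P where "P U \<epsilon> V \<longleftrightarrow> (open V \<and> E \<subseteq> V \<and> V \<subseteq> U \<and> emeasure lebesgue V \<le> ennreal \<epsilon> \<and>
     (\<forall>x \<rho> z. 0 < \<rho> \<longrightarrow> z \<notin> U \<longrightarrow> dist x z < 5*\<rho> \<longrightarrow> emeasure lebesgue (V \<inter> {x-\<rho><..x+\<rho>}) \<le> ennreal (\<epsilon>*\<rho>)))" for U \<epsilon> V
  have ex: "\<exists>V. P U \<epsilon> V" if "open U" "E \<subseteq> U" "\<epsilon> > 0" for U \<epsilon>
    unfolding P_def by (rule sparse_cover[OF that(1,2) En that(3)])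
  define Sp where "Sp U \<epsilon> = (SOME V. P U \<epsilon> V)" for U \<epsilon>
  have Sp: "open (Sp U \<epsilon>) \<and> E \<subseteq> Sp U \<epsilon> \<and> Sp U \<epsilon> \<subseteq> U \<and> emeasure lebesgue (Sp U \<epsilon>) \<le> ennreal \<epsilon> \<and>
     (\<forall>x \<rho> z. 0 < \<rho> \<longrightarrow> z \<notin> U \<longrightarrow> dist x z < 5*\<rho> \<longrightarrow> emeasure lebesgue (Sp U \<epsilon> \<inter> {x-\<rho><..x+\<rho>}) \<le> ennreal (\<epsilon>*\<rho>))"
    if "open U" "E \<subseteq> U" "\<epsilon> > 0" for U \<epsilon>
    using someI_ex[OF ex[OF that]] unfolding Sp_def P_def .
  define G where "G = rec_nat UNIV (\<lambda>m Gm. Sp (Gm \<inter> Op m) (eps (Suc m)))"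
  have G0: "G 0 = UNIV" unfolding G_def by simp
  have GS: "G (Suc m) = Sp (G m \<inter> Op m) (eps (Suc m))" for m unfolding G_def by simp
  have inv: "open (G m) \<and> E \<subseteq> G m" for m
  proof (induction m)
    case 0 then show ?case using G0 by simp
  next
    case (Suc m)
    have "open (G m \<inter> Op m)" "E \<subseteq> G m \<inter> Op m" using Suc Op EO by auto
    then show ?case using Sp[of "G m \<inter> Op m" "eps (Suc m)"] eps_pos GS by auto
  qed
  have step: "open (G (Suc m)) \<and> E \<subseteq> G (Suc m) \<and> G (Suc m) \<subseteq> G m \<inter> Op m \<and> emeasure lebesgue (G (Suc m)) \<le> ennreal (eps (Suc m)) \<and>
     (\<forall>x \<rho> z. 0 < \<rho> \<longrightarrow> z \<notin> G m \<inter> Op m \<longrightarrow> dist x z < 5*\<rho> \<longrightarrow> emeasure lebesgue (G (Suc m) \<inter> {x-\<rho><..x+\<rho>}) \<le> ennreal (eps (Suc m)*\<rho>))" for m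
  proof -
    have "open (G m \<inter> Op m)" "E \<subseteq> G m \<inter> Op m" using inv[of m] Op EO by auto
    then show ?thesis unfolding GS using Sp[of "G m \<inter> Op m" "eps (Suc m)"] eps_pos by blast
  qed
  have "constr E G"
  proof
    show "G 0 = UNIV" by (rule G0)
    show "open (G m)" for m using inv by blast
    show "G (Suc m) \<subseteq> G m" for m using step by blast
    show "E \<subseteq> G m" for m using inv by blast
    show "(\<Inter>m. G m) \<subseteq> E"
    proof
      fix x assume "x \<in> (\<Inter>m. G m)"
      then have "x \<in> Op m" for m using step[of m] by blast
      then show "x \<in> E" using EO by blast
    qed
    show "E \<in> null_sets lebesgue" by (rule En)
    show "emeasure lebesgue (G (Suc m)) \<le> ennreal (eps (Suc m))" for m using step by blast
    show "emeasure lebesgue (G (Suc m) \<inter> {x-\<rho><..x+\<rho>}) \<le> ennreal (eps (Suc m) * \<rho>)"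
      if "\<rho> > 0" "z \<notin> G m" "dist x z < 5 * \<rho>" for m x \<rho> z
      using step[of m] that by blast
  qed
  then show ?thesis by blast
qed

theorem theorem2:
  shows "(\<forall>f :: real \<Rightarrow> real. continuous_on UNIV f \<and> (mono f \<or> antimono f) \<longrightarrow>
            gdelta (L_inf f) \<and> L_inf f \<in> null_sets lebesgue)
       \<and> (\<forall>E :: real set. gdelta E \<and> E \<in> null_sets lebesgue \<longrightarrow>
            (\<exists>f :: real \<Rightarrow> real. continuous_on UNIV f \<and> (mono f \<or> antimono f) \<and>
               L_inf f = E \<and> l_inf f = {} \<and> (\<forall>x\<in>E. lip_lower f x = 0)))"
proof (rule conjI; intro allI impI)
  fix f :: "real \<Rightarrow> real"
  assume H: "continuous_on UNIV f \<and> (mono f \<or> antimono f)"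
  then have c: "continuous_on UNIV f" by simp
  show "gdelta (L_inf f) \<and> L_inf f \<in> null_sets lebesgue"
  proof (cases "mono f")
    case True
    then show ?thesis using forward_gdelta[OF True c] forward_null[OF True c] by simp
  next
    case False
    then have "antimono f" using H by simp
    then have m: "mono (\<lambda>x. - f x)" unfolding mono_def antimono_def by simp
    have c': "continuous_on UNIV (\<lambda>x. - f x)" using c by (intro continuous_intros)
    show ?thesis using forward_gdelta[OF m c'] forward_null[OF m c'] Linf_uminus[of f] by simp
  qed
next
  fix E :: "real set"
  assume H: "gdelta E \<and> E \<in> null_sets lebesgue"
  then obtain G where "constr E G" using construct_G by blast
  then interpret constr E G .
  show "\<exists>f :: real \<Rightarrow> real. continuous_on UNIV f \<and> (mono f \<or> antimono f) \<and>
               L_inf f = E \<and> l_inf f = {} \<and> (\<forall>x\<in>E. lip_lower f x = 0)"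
    using f_cont f_mono L_inf_eq l_inf_eq lip_in_E by blast
qed


end
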